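(* Let $d,N\ge1$, $\sigma_0>0$, and let $W^*\in\mathbb{R}^{d\times d}$ be symmetric positive semidefinite. Consider matrices $W_1,\dots,W_N\in\mathbb{R}^{d\times d}$ with product $W=W_NW_{N-1}\cdots W_1$, initialized as $W_n(0)=\sqrt[N]{\sigma_0}\,I$ for all $n$, and trained by gradient flow on the depth-normalized loss $$\ell_N(W_1,\dots,W_N)=\frac{1}{2N}\mathbb{E}_A\big[\langle W_N\cdots W_1-W^*,A\rangle^2\big]=\frac{1}{2N}\|W_N\cdots W_1-W^*\|_F^2,$$ with $A$ having i.i.d. standard Gaussian entries. Then, letting $U$ be an orthogonal matrix diagonalizing $W^*$, $W(t)$ stays diagonalized by $U$ and its singular values satisfy $$\dot\sigma_i(t)=\sigma_i(t)^{2-\frac2N}(\sigma_i^*-\sigma_i(t)),$$ where $\sigma_i$ and $\sigma_i^*$ are the $i$th singular values of $W$ and $W^*$ respectively, corresponding to the same singular vector.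
   Context: $\langle X,Y\rangle=\mathrm{tr}(X^TY)$. Gradient flow means $\dot W_n=-\nabla_{W_n}\ell_N$ for each $n$ in continuous time. *)

theory Defs
  imports "HOL-Analysis.Analysis"
begin

text \<open>Ordered product of the first k factors: prodmat k Ws = Ws (k-1) ** ... ** Ws 0.
  The paper's W_1,...,W_N correspond to Ws 0, ..., Ws (N-1).\<close>
fun prodmat :: "nat \<Rightarrow> (nat \<Rightarrow> real^'d^'d) \<Rightarrow> real^'d^'d" where
  "prodmat 0 Ws = mat 1"
| "prodmat (Suc k) Ws = Ws k ** prodmat k Ws"

text \<open>Depth-normalized loss (1/(2N)) ||W_N...W_1 - W*||_F^2; the norm on real^'d^'d is Frobenius.\<close>
definition lossN :: "nat \<Rightarrow> real^'d^'d \<Rightarrow> (nat \<Rightarrow> real^'d^'d) \<Rightarrow> real" where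
  "lossN N Wst Ws = (1 / (2 * real N)) * (norm (prodmat N Ws - Wst))\<^sup>2"

definition grad_flow :: "nat \<Rightarrow> real^'d^'d \<Rightarrow> (nat \<Rightarrow> real \<Rightarrow> real^'d^'d) \<Rightarrow> bool" where
  "grad_flow N Wst Ws \<longleftrightarrow>
     (\<forall>t\<ge>0. \<forall>n<N. \<exists>G.
        (GDERIV (\<lambda>X. lossN N Wst ((\<lambda>k. Ws k t)(n := X))) (Ws n t) :> G) \<and>
        (Ws n has_vector_derivative (- G)) (at t within {0..}))"

end

theory Submission
  imports Defs
begin


type_synonym ('d) mt = "real^'d::finite^'d"

lemma norm_mat_sq: "(norm (M::('d::finite) mt))^2 = (\<Sum>i\<in>UNIV. \<Sum>j\<in>UNIV. (M$i$j)^2)"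
  by (simp add: norm_vec_def L2_set_def sum_nonneg)

lemma inner_mat: "inner (X::('d::finite) mt) Y = (\<Sum>i\<in>UNIV. \<Sum>j\<in>UNIV. X$i$j * Y$i$j)"
  by (simp add: inner_vec_def)

lemma swap3: "(\<Sum>i\<in>A. \<Sum>j\<in>B. \<Sum>l\<in>C. f i j l) = (\<Sum>l\<in>C. \<Sum>j\<in>B. \<Sum>i\<in>A. (f i j l::real))"
proof -
  have "(\<Sum>i\<in>A. \<Sum>j\<in>B. \<Sum>l\<in>C. f i j l) = (\<Sum>i\<in>A. \<Sum>l\<in>C. \<Sum>j\<in>B. f i j l)"
    by (rule sum.cong[OF refl], rule sum.swap)
  also have "\<dots> = (\<Sum>l\<in>C. \<Sum>i\<in>A. \<Sum>j\<in>B. f i j l)" by (rule sum.swap)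
  also have "\<dots> = (\<Sum>l\<in>C. \<Sum>j\<in>B. \<Sum>i\<in>A. f i j l)"
    by (rule sum.cong[OF refl], rule sum.swap)
  finally show ?thesis .
qed

lemma norm_mult_le: "norm ((X::('d::finite) mt) ** (Y::'d mt)) \<le> norm X * norm Y"
proof -
  have e: "\<And>i j. ((X ** Y)$i$j)^2 \<le> (\<Sum>k\<in>UNIV. (X$i$k)^2) * (\<Sum>k\<in>UNIV. (Y$k$j)^2)"
    unfolding matrix_matrix_mult_def by (simp add: Cauchy_Schwarz_ineq_sum)
  have "(norm (X ** Y))^2 \<le> (\<Sum>i\<in>UNIV. \<Sum>j\<in>UNIV. (\<Sum>k\<in>UNIV. (X$i$k)^2) * (\<Sum>k\<in>UNIV. (Y$k$j)^2))"
    by (subst norm_mat_sq) (intro sum_mono e)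
  also have "\<dots> = (\<Sum>i\<in>UNIV. \<Sum>k\<in>UNIV. (X$i$k)^2) * (\<Sum>j\<in>UNIV. \<Sum>k\<in>UNIV. (Y$k$j)^2)"
    by (rule sum_product[symmetric])
  also have "(\<Sum>j\<in>UNIV. \<Sum>k\<in>UNIV. (Y$k$j)^2) = (\<Sum>k\<in>UNIV. \<Sum>j\<in>UNIV. (Y$k$j)^2)"
    by (rule sum.swap)
  also have "(\<Sum>i\<in>UNIV. \<Sum>k\<in>UNIV. (X$i$k)^2) * (\<Sum>k\<in>UNIV. \<Sum>j\<in>UNIV. (Y$k$j)^2) = (norm X)^2 * (norm Y)^2"
    by (simp add: norm_mat_sq)
  finally have "(norm (X ** Y))^2 \<le> (norm X * norm Y)^2" by (simp add: power_mult_distrib)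
  then show ?thesis by (simp add: power2_le_iff_abs_le)
qed

lemma norm_transpose: "norm (transpose (X::('d::finite) mt)) = norm X"
proof -
  have "(norm (transpose X))^2 = (norm X)^2"
    unfolding norm_mat_sq transpose_def using sum.swap[of "\<lambda>i j. (X$j$i)^2"] by simp
  then show ?thesis by (simp add: power2_eq_iff_nonneg)
qed

lemma inner_multL: "inner ((A::('d::finite) mt) ** (H::'d mt)) (M::'d mt) = inner H (transpose A ** M)"
proof -
  have "inner (A ** H) M = (\<Sum>i\<in>UNIV. \<Sum>j\<in>UNIV. \<Sum>l\<in>UNIV. A$i$l * H$l$j * M$i$j)"
    unfolding inner_mat by (simp add: matrix_matrix_mult_def sum_distrib_right)
  also have "\<dots> = (\<Sum>l\<in>UNIV. \<Sum>j\<in>UNIV. \<Sum>i\<in>UNIV. A$i$l * H$l$j * M$i$j)" by (rule swap3)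
  also have "\<dots> = inner H (transpose A ** M)"
    unfolding inner_mat by (simp add: matrix_matrix_mult_def transpose_def sum_distrib_left ac_simps)
  finally show ?thesis .
qed

lemma inner_multR: "inner ((H::('d::finite) mt) ** (B::'d mt)) (M::'d mt) = inner H (M ** transpose B)"
proof -
  have "inner (H ** B) M = (\<Sum>i\<in>UNIV. \<Sum>j\<in>UNIV. \<Sum>l\<in>UNIV. H$i$l * B$l$j * M$i$j)"
    unfolding inner_mat by (simp add: matrix_matrix_mult_def sum_distrib_right)
  also have "\<dots> = (\<Sum>i\<in>UNIV. \<Sum>l\<in>UNIV. \<Sum>j\<in>UNIV. H$i$l * B$l$j * M$i$j)"
    by (rule sum.cong[OF refl], rule sum.swap)
  also have "\<dots> = inner H (M ** transpose B)"
    unfolding inner_mat by (simp add: matrix_matrix_mult_def transpose_def sum_distrib_left ac_simps)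
  finally show ?thesis .
qed

lemma inner_mult3: "inner ((A::('d::finite) mt) ** (H::'d mt) ** (B::'d mt)) (M::'d mt) = inner H (transpose A ** M ** transpose B)"
  using inner_multR[of "A ** H" B M] inner_multL[of A H "M ** transpose B"]
  by (simp add: matrix_mul_assoc)


lemma mm_diff_left: "((A::('d::finite) mt) - B) ** (C::'d mt) = A ** C - B ** C"
  by (simp add: matrix_matrix_mult_def vec_eq_iff sum_subtractf algebra_simps)
lemma mm_diff_right: "(A::('d::finite) mt) ** ((B::'d mt) - C) = A ** B - A ** C"
  by (simp add: matrix_matrix_mult_def vec_eq_iff sum_subtractf algebra_simps)
lemma mm_add_left: "((A::('d::finite) mt) + B) ** (C::'d mt) = A ** C + B ** C"
  by (simp add: matrix_matrix_mult_def vec_eq_iff sum.distrib algebra_simps)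
lemma mm_add_right: "(A::('d::finite) mt) ** ((B::'d mt) + C) = A ** B + A ** C"
  by (simp add: matrix_matrix_mult_def vec_eq_iff sum.distrib algebra_simps)
lemma mm_scale_left: "(c *\<^sub>R (A::('d::finite) mt)) ** (C::'d mt) = c *\<^sub>R (A ** C)"
  by (simp add: matrix_matrix_mult_def vec_eq_iff sum_distrib_left algebra_simps)
lemma mm_scale_right: "(A::('d::finite) mt) ** (c *\<^sub>R (C::'d mt)) = c *\<^sub>R (A ** C)"
  by (simp add: matrix_matrix_mult_def vec_eq_iff sum_distrib_left algebra_simps)
lemma transpose_diff: "transpose ((A::('d::finite) mt) - B) = transpose A - transpose B"
  by (simp add: transpose_def vec_eq_iff)

lemma bl_mm3: "bounded_linear (\<lambda>h. (A::('d::finite) mt) ** (h::'d mt) ** (B::'d mt))"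
proof -
  have "linear (\<lambda>h. (A::('d::finite) mt) ** (h::'d mt) ** (B::'d mt))"
    by (rule linearI) (simp_all add: mm_add_left mm_add_right mm_scale_left mm_scale_right)
  then show ?thesis by (simp add: linear_conv_bounded_linear)
qed

lemma prodmat_cong: "(\<And>k. k < K \<Longrightarrow> X k = Y k) \<Longrightarrow> prodmat K X = prodmat K Y"
  by (induction K) auto

lemma prodmat_split: "prodmat (m + Suc n) W = prodmat m (\<lambda>k. W (k + Suc n)) ** W n ** prodmat n W"
proof (induction m)
  case 0 then show ?case by (simp add: matrix_mul_lid)
next
  case (Suc m) then show ?case by (simp add: matrix_mul_assoc)
qed

lemma prodmat_conj:
  assumes "orthogonal_matrix (U::('d::finite) mt)"
  shows "transpose U ** prodmat K X ** U = prodmat K (\<lambda>k. transpose U ** X k ** U)"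
proof (induction K)
  case 0 then show ?case using assms by (simp add: matrix_mul_rid orthogonal_matrix)
next
  case (Suc K)
  have "transpose U ** prodmat (Suc K) X ** U = (transpose U ** X K ** U) ** (transpose U ** prodmat K X ** U)"
  proof -
    have uu: "U ** transpose U = mat 1" using assms by (simp add: orthogonal_matrix_def)
    have "(transpose U ** X K ** U) ** (transpose U ** prodmat K X ** U) = transpose U ** X K ** (U ** transpose U) ** prodmat K X ** U"
      by (simp only: matrix_mul_assoc)
    then show ?thesis by (simp add: uu matrix_mul_assoc)
  qed
  then show ?case using Suc by simp
qed

lemma prodmat_norm:
  assumes "\<And>k. k < K \<Longrightarrow> norm (X k) \<le> R" "0 \<le> R"
  shows "norm (prodmat K (X::nat \<Rightarrow> ('d::finite) mt)) \<le> norm (mat 1::'d mt) * R^K"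
  using assms(1)
proof (induction K)
  case 0 then show ?case by simp
next
  case (Suc K)
  have "norm (prodmat (Suc K) X) \<le> norm (X K) * norm (prodmat K X)" by (simp add: norm_mult_le)
  also have "\<dots> \<le> R * (norm (mat 1::'d mt) * R^K)"
    using Suc assms(2) by (intro mult_mono) auto
  finally show ?case by (simp add: ac_simps)
qed

lemma prodmat_diff:
  assumes "\<And>k. k < K \<Longrightarrow> norm (X k) \<le> R" "\<And>k. k < K \<Longrightarrow> norm (Y k) \<le> R"
    "\<And>k. k < K \<Longrightarrow> norm (X k - Y k) \<le> \<delta>" "1 \<le> R"
  shows "norm (prodmat K (X::nat \<Rightarrow> ('d::finite) mt) - prodmat K Y) \<le> norm (mat 1::'d mt) * real K * R^K * \<delta>"
  using assms(1-3)
proof (induction K)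
  case 0 then show ?case by simp
next
  case (Suc K)
  let ?c = "norm (mat 1::'d mt)"
  have d0: "0 \<le> \<delta>" using Suc.prems(3)[of 0] norm_ge_zero[of "X 0 - Y 0"] by linarith
  have eq: "prodmat (Suc K) X - prodmat (Suc K) Y = (X K - Y K) ** prodmat K X + Y K ** (prodmat K X - prodmat K Y)"
    by (simp add: mm_diff_left mm_diff_right)
  have "norm (prodmat (Suc K) X - prodmat (Suc K) Y) \<le> norm (X K - Y K) * norm (prodmat K X) + norm (Y K) * norm (prodmat K X - prodmat K Y)"
    unfolding eq by (rule order_trans[OF norm_triangle_ineq add_mono[OF norm_mult_le norm_mult_le]])
  also have "\<dots> \<le> \<delta> * (?c * R^K) + R * (?c * real K * R^K * \<delta>)"
    using Suc assms(4) d0 by (intro add_mono mult_mono prodmat_norm) auto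
  also have "\<dots> \<le> ?c * real (Suc K) * R^(Suc K) * \<delta>"
  proof -
    have "R^K \<le> R^Suc K" using assms(4) by (simp add: power_increasing)
    then have "\<delta> * (?c * R^K) \<le> \<delta> * (?c * R^Suc K)" using d0 by (intro mult_left_mono) auto
    then show ?thesis by (simp add: algebra_simps)
  qed
  finally show ?case .
qed

definition isdiag :: "('d::finite) mt \<Rightarrow> bool" where
  "isdiag X \<longleftrightarrow> (\<forall>i j. i \<noteq> j \<longrightarrow> X$i$j = 0)"

lemma diag3:
  assumes "isdiag X" "isdiag Z"
  shows "(X ** (Y::('d::finite) mt) ** Z)$i$j = X$i$i * Y$i$j * Z$j$j"
proof -
  have "(X ** Y ** Z)$i$j = (\<Sum>k\<in>UNIV. (\<Sum>l\<in>UNIV. X$i$l * Y$l$k) * Z$k$j)"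
    by (simp add: matrix_matrix_mult_def)
  also have "\<dots> = (\<Sum>k\<in>UNIV. (X$i$i * Y$i$k) * Z$k$j)"
    using assms(1) unfolding isdiag_def
    by (intro sum.cong refl) (subst sum.remove[of _ i], auto intro!: sum.neutral)
  also have "\<dots> = X$i$i * Y$i$j * Z$j$j"
    using assms(2) unfolding isdiag_def
    by (subst sum.remove[of _ j], auto intro!: sum.neutral)
  finally show ?thesis .
qed

lemma isdiag_transpose: "isdiag X \<Longrightarrow> transpose X = X"
  unfolding isdiag_def transpose_def vec_eq_iff by (metis vec_lambda_beta)

lemma prodmat_const_diag:
  assumes "isdiag D"
  shows "prodmat K (\<lambda>k. D) $i$j = (if i = j then (D$i$i)^K else 0)"
proof (induction K arbitrary: j)
  case 0 then show ?case by (simp add: mat_def)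
next
  case (Suc K)
  have "prodmat (Suc K) (\<lambda>k. D) $i$j = (\<Sum>l\<in>UNIV. D$i$l * prodmat K (\<lambda>k. D) $l$j)"
    by (simp add: matrix_matrix_mult_def)
  also have "\<dots> = D$i$i * prodmat K (\<lambda>k. D) $i$j"
    using assms unfolding isdiag_def
    by (subst sum.remove[of _ i], auto intro!: sum.neutral)
  finally show ?case using Suc by simp
qed

lemma prodmat_const_isdiag: "isdiag D \<Longrightarrow> isdiag (prodmat K (\<lambda>k. D))"
  by (simp add: isdiag_def prodmat_const_diag)


lemma prodmat_upd:
  assumes "n < N"
  shows "prodmat N (Ws(n := X)) = prodmat (N - Suc n) (\<lambda>k. Ws (k + Suc n)) ** X ** prodmat n (Ws::nat \<Rightarrow> ('d::finite) mt)"
proof -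
  have N: "N = (N - Suc n) + Suc n" using assms by simp
  have "prodmat N (Ws(n := X)) = prodmat (N - Suc n) (\<lambda>k. (Ws(n := X)) (k + Suc n)) ** (Ws(n := X)) n ** prodmat n (Ws(n := X))"
    by (subst N, rule prodmat_split)
  also have "prodmat (N - Suc n) (\<lambda>k. (Ws(n := X)) (k + Suc n)) = prodmat (N - Suc n) (\<lambda>k. Ws (k + Suc n))"
    by (rule prodmat_cong) simp
  also have "prodmat n (Ws(n := X)) = prodmat n Ws"
    by (rule prodmat_cong) simp
  finally show ?thesis by (simp only: fun_upd_same)
qed

lemma grad_formula:
  fixes Ws :: "nat \<Rightarrow> ('d::finite) mt"
  assumes "n < N"
  shows "GDERIV (\<lambda>X. lossN N Wst (Ws(n := X))) (Ws n) :>
    ((1 / real N) *\<^sub>R (transpose (prodmat (N - Suc n) (\<lambda>k. Ws (k + Suc n))) ** (prodmat N Ws - Wst) ** transpose (prodmat n Ws)))"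
proof -
  define A where "A = prodmat (N - Suc n) (\<lambda>k. Ws (k + Suc n))"
  define B where "B = prodmat n Ws"
  have PN: "prodmat N Ws = A ** Ws n ** B"
    using prodmat_upd[OF assms, of Ws "Ws n"] by (simp add: A_def B_def)
  have f: "(\<lambda>X. lossN N Wst (Ws(n := X))) = (\<lambda>X. (1 / (2 * real N)) * inner (A ** X ** B - Wst) (A ** X ** B - Wst))"
    by (rule ext) (simp add: lossN_def prodmat_upd[OF assms] A_def B_def power2_norm_eq_inner)
  have g: "((\<lambda>X. A ** X ** B - Wst) has_derivative (\<lambda>h. A ** h ** B)) (at x)" for x
    using has_derivative_diff[OF bounded_linear_imp_has_derivative[OF bl_mm3[of A B]] has_derivative_const[of Wst]]
    by simp
  have d: "((\<lambda>X. (1 / (2 * real N)) * inner (A ** X ** B - Wst) (A ** X ** B - Wst)) has_derivative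
     (\<lambda>h. (1 / (2 * real N)) * (inner (A ** Ws n ** B - Wst) (A ** h ** B) + inner (A ** h ** B) (A ** Ws n ** B - Wst)))) (at (Ws n))"
    by (intro has_derivative_mult_right has_derivative_inner g)
  show ?thesis
    unfolding gderiv_def f A_def[symmetric] B_def[symmetric]
    apply (rule has_derivative_eq_rhs[OF d])
    apply (rule ext)
    apply (simp add: inner_commute[of "A ** Ws n ** B - Wst"] inner_mult3 PN)
    done
qed



definition FF :: "nat \<Rightarrow> ('d::finite) mt \<Rightarrow> (nat \<Rightarrow> 'd mt) \<Rightarrow> nat \<Rightarrow> 'd mt" where
  "FF N S X n = - ((1 / real N) *\<^sub>R (transpose (prodmat (N - Suc n) (\<lambda>k. X (k + Suc n))) ** (prodmat N X - S) ** transpose (prodmat n X)))"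

definition dg :: "('d::finite) mt \<Rightarrow> 'd mt" where
  "dg M = (\<chi> i j. if i = j then M$i$j else 0)"

lemma FF_cong: "n < N \<Longrightarrow> (\<And>k. k < N \<Longrightarrow> X k = Y k) \<Longrightarrow> FF N S X n = FF N S Y n"
proof -
  assume a: "n < N" "\<And>k. k < N \<Longrightarrow> X k = Y k"
  have "prodmat (N - Suc n) (\<lambda>k. X (k + Suc n)) = prodmat (N - Suc n) (\<lambda>k. Y (k + Suc n))"
    by (rule prodmat_cong) (simp add: a)
  moreover have "prodmat n X = prodmat n Y" by (rule prodmat_cong) (use a in auto)
  moreover have "prodmat N X = prodmat N Y" by (rule prodmat_cong) (simp add: a)
  ultimately show ?thesis unfolding FF_def by simp
qed

lemma FF_const:
  assumes "isdiag D" "isdiag S" "n < N"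
  shows "FF N S (\<lambda>k. D) n = (\<chi> i j. if i = j then - (1 / real N) * (D$i$i)^(N - 1) * ((D$i$i)^N - S$i$i) else 0)"
proof -
  have dN: "isdiag (prodmat N (\<lambda>k. D) - S)" using assms prodmat_const_diag[OF assms(1)]
    by (simp add: isdiag_def)
  have t1: "transpose (prodmat (N - Suc n) (\<lambda>k. D)) = prodmat (N - Suc n) (\<lambda>k. D)"
    by (rule isdiag_transpose[OF prodmat_const_isdiag[OF assms(1)]])
  have t2: "transpose (prodmat n (\<lambda>k. D)) = prodmat n (\<lambda>k. D)"
    by (rule isdiag_transpose[OF prodmat_const_isdiag[OF assms(1)]])
  have pw: "(D$i$i)^(N - Suc n) * (D$i$i)^n = (D$i$i)^(N - 1)" for i
    using assms(3) by (simp add: power_add[symmetric])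
  have e: "FF N S (\<lambda>k. D) n $i$j = (if i = j then - (1 / real N) * (D$i$i)^(N - 1) * ((D$i$i)^N - S$i$j) else 0)" for i j
  proof -
    have "FF N S (\<lambda>k. D) n $i$j = - (1 / real N) * ((prodmat (N - Suc n) (\<lambda>k. D) ** (prodmat N (\<lambda>k. D) - S) ** prodmat n (\<lambda>k. D))$i$j)"
      unfolding FF_def t1 t2 by simp
    also have "\<dots> = - (1 / real N) * ((prodmat (N - Suc n) (\<lambda>k. D))$i$i * (prodmat N (\<lambda>k. D) - S)$i$j * (prodmat n (\<lambda>k. D))$j$j)"
      by (simp only: diag3[OF prodmat_const_isdiag[OF assms(1)] prodmat_const_isdiag[OF assms(1)]])
    also have "\<dots> = (if i = j then - (1 / real N) * (D$i$i)^(N - 1) * ((D$i$i)^N - S$i$j) else 0)"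
    proof (cases "i = j")
      case True
      have r: "(D$i$i)^(N - Suc n) * ((D$i$i)^N - S$i$j) * (D$i$i)^n = (D$i$i)^(N - 1) * ((D$i$i)^N - S$i$j)"
      proof -
        have "(D$i$i)^(N - Suc n) * ((D$i$i)^N - S$i$j) * (D$i$i)^n = ((D$i$i)^(N - Suc n) * (D$i$i)^n) * ((D$i$i)^N - S$i$j)"
          by (simp only: mult_ac)
        then show ?thesis by (simp only: pw)
      qed
      have "- (1 / real N) * ((D$i$i)^(N - Suc n) * ((D$i$i)^N - S$i$j) * (D$i$i)^n) = - (1 / real N) * (D$i$i)^(N - 1) * ((D$i$i)^N - S$i$j)"
        unfolding r by simp
      then show ?thesis using True by (simp add: prodmat_const_diag[OF assms(1)])
    next
      case False
      then show ?thesis using assms(2) by (simp add: prodmat_const_diag[OF assms(1)] isdiag_def)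
    qed
    finally show ?thesis .
  qed
  show ?thesis by (simp add: vec_eq_iff e)
qed

lemma trilip:
  fixes X X' Y Y' Z Z' :: "('d::finite) mt"
  assumes "norm X \<le> M" "norm X' \<le> M" "norm Y \<le> M" "norm Y' \<le> M" "norm Z \<le> M" "norm Z' \<le> M"
    "norm (X - X') \<le> M * \<delta>" "norm (Y - Y') \<le> M * \<delta>" "norm (Z - Z') \<le> M * \<delta>" "0 \<le> \<delta>"
  shows "norm (X ** Y ** Z - X' ** Y' ** Z') \<le> 3 * M^3 * \<delta>"
proof -
  have M0: "0 \<le> M" using assms(1) norm_ge_zero[of X] by linarith
  have eq: "X ** Y ** Z - X' ** Y' ** Z' = (X - X') ** Y ** Z + X' ** (Y - Y') ** Z + X' ** Y' ** (Z - Z')"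
    by (simp add: mm_diff_left mm_diff_right)
  have "norm (X ** Y ** Z - X' ** Y' ** Z') \<le> norm ((X - X') ** Y ** Z) + norm (X' ** (Y - Y') ** Z) + norm (X' ** Y' ** (Z - Z'))"
    unfolding eq by (rule order_trans[OF norm_triangle_ineq add_right_mono[OF norm_triangle_ineq]])
  also have "\<dots> \<le> norm (X - X') * norm Y * norm Z + norm X' * norm (Y - Y') * norm Z + norm X' * norm Y' * norm (Z - Z')"
    by (intro add_mono order_trans[OF norm_mult_le] mult_right_mono norm_mult_le norm_ge_zero)
      (auto intro: order_trans[OF norm_mult_le] mult_left_mono norm_mult_le)
  also have "\<dots> \<le> (M * \<delta>) * M * M + M * (M * \<delta>) * M + M * M * (M * \<delta>)"
    using assms M0 by (intro add_mono mult_mono) (auto intro: mult_nonneg_nonneg)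
  also have "\<dots> = 3 * M^3 * \<delta>" by (simp add: power3_eq_cube algebra_simps)
  finally show ?thesis .
qed

lemma FF_lip:
  fixes X Y :: "nat \<Rightarrow> ('d::finite) mt"
  assumes "\<And>k. k < N \<Longrightarrow> norm (X k) \<le> R" "\<And>k. k < N \<Longrightarrow> norm (Y k) \<le> R"
    "\<And>k. k < N \<Longrightarrow> norm (X k - Y k) \<le> \<delta>" "1 \<le> R" "n < N" "0 \<le> \<delta>"
  shows "norm (FF N S X n - FF N S Y n) \<le> 3 * (norm (mat 1::'d mt) * real (Suc N) * R^N + norm S)^3 * \<delta>"
proof -
  let ?c = "norm (mat 1::'d mt)"
  define M where "M = ?c * real (Suc N) * R^N + norm S"
  have c0: "0 \<le> ?c" by simp
  have RN: "R^m \<le> R^N" if "m \<le> N" for m using that assms(4) by (simp add: power_increasing)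
  have bN: "?c * R^N \<le> ?c * real (Suc N) * R^N"
  proof -
    have "0 \<le> ?c * R^N" using c0 assms(4) by simp
    then have "?c * R^N * 1 \<le> ?c * R^N * real (Suc N)" by (intro mult_left_mono) simp_all
    then show ?thesis by (simp add: ac_simps)
  qed
  have b1: "?c * R^m \<le> M" if "m \<le> N" for m
  proof -
    have "?c * R^m \<le> ?c * R^N" using RN[OF that] c0 by (rule mult_left_mono)
    then show ?thesis unfolding M_def using bN norm_ge_zero[of S] by linarith
  qed
  have b2: "?c * real m * R^m * \<delta> \<le> M * \<delta>" if "m \<le> N" for m
  proof -
    have "?c * real m * R^m \<le> ?c * real (Suc N) * R^N"
      using that c0 assms(4) RN[OF that] by (intro mult_mono) auto
    then have "?c * real m * R^m \<le> M" unfolding M_def using norm_ge_zero[of S] by linarith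
    then show ?thesis using assms(6) by (rule mult_right_mono)
  qed
  define AX where "AX = prodmat (N - Suc n) (\<lambda>k. X (k + Suc n))"
  define AY where "AY = prodmat (N - Suc n) (\<lambda>k. Y (k + Suc n))"
  have nA: "norm AX \<le> M" "norm AY \<le> M"
    unfolding AX_def AY_def using assms(1,2,4)
    by (auto intro!: order_trans[OF prodmat_norm[where R=R] b1])
  have dA: "norm (AX - AY) \<le> M * \<delta>"
    unfolding AX_def AY_def
    apply (rule order_trans[OF prodmat_diff[where R=R and \<delta>=\<delta>] b2])
    using assms(1-4) by auto
  have nB: "norm (prodmat n X) \<le> M" "norm (prodmat n Y) \<le> M"
    using assms(1,2,4,5) by (auto intro!: order_trans[OF prodmat_norm[where R=R] b1])
  have dB: "norm (prodmat n X - prodmat n Y) \<le> M * \<delta>"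
    apply (rule order_trans[OF prodmat_diff[where R=R and \<delta>=\<delta>] b2])
    using assms(1-5) by auto
  have nQ: "norm (prodmat N X - S) \<le> M" "norm (prodmat N Y - S) \<le> M"
  proof -
    have "norm (prodmat N X) \<le> ?c * R^N" using assms by (intro prodmat_norm) auto
    then show "norm (prodmat N X - S) \<le> M" unfolding M_def
      using norm_triangle_ineq4[of "prodmat N X" S] bN by linarith
    have "norm (prodmat N Y) \<le> ?c * R^N" using assms by (intro prodmat_norm) auto
    then show "norm (prodmat N Y - S) \<le> M" unfolding M_def
      using norm_triangle_ineq4[of "prodmat N Y" S] bN by linarith
  qed
  have dP: "norm (prodmat N X - prodmat N Y) \<le> M * \<delta>"
    apply (rule order_trans[OF prodmat_diff[where R=R and \<delta>=\<delta>] b2])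
    using assms(1-4) by auto
  then have dQ: "norm ((prodmat N X - S) - (prodmat N Y - S)) \<le> M * \<delta>" by simp
  have main: "norm (transpose AX ** (prodmat N X - S) ** transpose (prodmat n X) - transpose AY ** (prodmat N Y - S) ** transpose (prodmat n Y)) \<le> 3 * M^3 * \<delta>"
    by (rule trilip) (simp_all add: norm_transpose nA nB nQ dQ dP assms(6) transpose_diff[symmetric] dA dB)
  have "FF N S X n - FF N S Y n = - ((1 / real N) *\<^sub>R (transpose AX ** (prodmat N X - S) ** transpose (prodmat n X) - transpose AY ** (prodmat N Y - S) ** transpose (prodmat n Y)))"
    unfolding FF_def AX_def AY_def by (simp add: scaleR_diff_right)
  then have "norm (FF N S X n - FF N S Y n) = (1 / real N) * norm (transpose AX ** (prodmat N X - S) ** transpose (prodmat n X) - transpose AY ** (prodmat N Y - S) ** transpose (prodmat n Y))"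
    by simp
  also have "\<dots> \<le> 1 * (3 * M^3 * \<delta>)"
    using main assms(5) by (intro mult_mono) auto
  finally have "norm (FF N S X n - FF N S Y n) \<le> 3 * M^3 * \<delta>" by (simp only: mult_1)
  then show ?thesis unfolding M_def .
qed



definition avg :: "nat \<Rightarrow> (nat \<Rightarrow> ('d::finite) mt) \<Rightarrow> 'd mt" where
  "avg N X = (1 / real N) *\<^sub>R (\<Sum>n<N. dg (X n))"

lemma bl_dg: "bounded_linear (dg :: ('d::finite) mt \<Rightarrow> 'd mt)"
proof -
  have "linear (dg :: ('d::finite) mt \<Rightarrow> 'd mt)"
    by (rule linearI) (simp_all add: dg_def vec_eq_iff)
  then show ?thesis by (simp add: linear_conv_bounded_linear)
qed

lemma dg_norm: "norm (dg (M::('d::finite) mt)) \<le> norm M"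
proof -
  have "(norm (dg M))^2 \<le> (norm M)^2"
    unfolding norm_mat_sq by (intro sum_mono) (simp add: dg_def)
  then show ?thesis by (simp add: power2_le_iff_abs_le)
qed

lemma isdiag_dg: "isdiag (dg M)" by (simp add: isdiag_def dg_def)

lemma dg_isdiag: "isdiag M \<Longrightarrow> dg M = M"
  by (auto simp: isdiag_def dg_def vec_eq_iff)

lemma inner_dg: "isdiag Z \<Longrightarrow> inner (M::('d::finite) mt) Z = inner (dg M) Z"
  unfolding inner_mat by (intro sum.cong refl) (auto simp: dg_def isdiag_def)

lemma isdiag_sum: "(\<And>n. n \<in> A \<Longrightarrow> isdiag (X n)) \<Longrightarrow> isdiag (\<Sum>n\<in>A. X n)"
  by (induction A rule: infinite_finite_induct) (auto simp: isdiag_def)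

lemma isdiag_avg: "isdiag (avg N X)"
proof -
  have "isdiag (\<Sum>n<N. dg (X n))" by (rule isdiag_sum) (rule isdiag_dg)
  then show ?thesis by (auto simp: isdiag_def avg_def)
qed

lemma dg_sum: "dg (\<Sum>n\<in>A. X n) = (\<Sum>n\<in>A. dg (X n))"
  by (induction A rule: infinite_finite_induct) (auto simp: dg_def vec_eq_iff)

lemma dg_scale: "dg (c *\<^sub>R M) = c *\<^sub>R dg M"
  by (auto simp: dg_def vec_eq_iff)

lemma dg_diff: "dg (A - B) = dg A - dg B"
  by (auto simp: dg_def vec_eq_iff)

lemma sum_dev_diag:
  assumes "N \<ge> 1" "isdiag Z"
  shows "(\<Sum>n<N. inner (X n - avg N X) Z) = 0"
proof -
  have "(\<Sum>n<N. inner (X n - avg N X) Z) = inner (\<Sum>n<N. (X n - avg N X)) Z"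
    by (simp add: inner_sum_left)
  also have "\<dots> = inner (dg (\<Sum>n<N. (X n - avg N X))) Z"
    by (rule inner_dg[OF assms(2)])
  also have "dg (\<Sum>n<N. (X n - avg N X)) = 0"
  proof -
    have "dg (\<Sum>n<N. (X n - avg N X)) = (\<Sum>n<N. dg (X n)) - real N *\<^sub>R avg N X"
      by (simp add: dg_sum dg_diff sum_subtractf dg_isdiag[OF isdiag_avg] dg_scale sum_constant_scaleR del: sum_constant)
    also have "\<dots> = 0" using assms(1) by (simp add: avg_def)
    finally show ?thesis .
  qed
  finally show ?thesis by simp
qed

lemma avg_norm:
  assumes "N \<ge> 1" "\<And>n. n < N \<Longrightarrow> norm (X n) \<le> R"
  shows "norm (avg N X) \<le> R"
proof -
  have "norm (\<Sum>n<N. dg (X n)) \<le> (\<Sum>n<N. norm (dg (X n)))" by (rule norm_sum)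
  also have "\<dots> \<le> (\<Sum>n<N. R)" using assms(2) by (intro sum_mono order_trans[OF dg_norm]) auto
  finally have "norm (\<Sum>n<N. dg (X n)) \<le> real N * R" by simp
  then show ?thesis using assms(1) unfolding avg_def by (simp add: field_simps)
qed

lemma avg_const: "N \<ge> 1 \<Longrightarrow> isdiag C \<Longrightarrow> (\<And>n. n < N \<Longrightarrow> X n = C) \<Longrightarrow> avg N X = C"
  unfolding avg_def by (simp add: dg_isdiag sum_constant_scaleR del: sum_constant)

lemma incr0:
  fixes h :: "real \<Rightarrow> real"
  assumes "0 \<le> T" "\<And>t. 0 \<le> t \<Longrightarrow> t \<le> T \<Longrightarrow> (h has_real_derivative h' t) (at t within {0..})"
    "\<And>t. 0 \<le> t \<Longrightarrow> t \<le> T \<Longrightarrow> 0 \<le> h' t"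
  shows "h 0 \<le> h T"
proof (rule DERIV_nonneg_imp_increasing_open[OF assms(1)])
  fix x assume x: "0 < x" "x < T"
  have "(h has_real_derivative h' x) (at x within {0<..})"
    using assms(2)[of x] x by (auto intro: DERIV_subset)
  then have "(h has_real_derivative h' x) (at x)"
    using at_within_open[of x "{0<..}"] x by simp
  then show "\<exists>y. (h has_real_derivative y) (at x) \<and> 0 \<le> y" using assms(3)[of x] x by auto
next
  show "continuous_on {0..T} h"
    unfolding continuous_on_eq_continuous_within
  proof
    fix t assume t: "t \<in> {0..T}"
    have "continuous (at t within {0..}) h"
      using assms(2)[of t] t by (auto intro: DERIV_continuous)
    then show "continuous (at t within {0..T}) h"
      by (rule continuous_within_subset) auto
  qed
qed



lemma collapse:
  fixes V :: "nat \<Rightarrow> real \<Rightarrow> ('d::finite) mt" and S :: "'d mt"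
  assumes N: "N \<ge> 1" and Sd: "isdiag S" and C0d: "isdiag C0"
    and init: "\<And>n. n < N \<Longrightarrow> V n 0 = C0"
    and ode: "\<And>t n. 0 \<le> t \<Longrightarrow> n < N \<Longrightarrow> (V n has_vector_derivative FF N S (\<lambda>k. V k t) n) (at t within {0..})"
    and T: "0 \<le> T" and n: "n < N"
  shows "V n T = avg N (\<lambda>k. V k T)"
proof -
  have cont: "continuous_on {0..T} (V k)" if "k < N" for k
    by (rule continuous_on_vector_derivative)
      (auto intro: has_vector_derivative_within_subset[OF ode] that)
  have "compact (\<Union>k<N. V k ` {0..T})" by (intro compact_UN compact_continuous_image cont) auto
  then obtain R0 where R0: "\<And>x. x \<in> (\<Union>k<N. V k ` {0..T}) \<Longrightarrow> norm x \<le> R0"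
    using compact_imp_bounded bounded_iff by metis
  define R where "R = max 1 R0"
  have R1: "1 \<le> R" by (simp add: R_def)
  have bV: "norm (V k t) \<le> R" if "k < N" "0 \<le> t" "t \<le> T" for k t
  proof -
    have "norm (V k t) \<le> R0" using that by (intro R0 UN_I[of k]) auto
    then show ?thesis by (simp add: R_def)
  qed
  define A where "A t = avg N (\<lambda>k. V k t)" for t
  have bA: "norm (A t) \<le> R" if "0 \<le> t" "t \<le> T" for t
    unfolding A_def using N bV that by (intro avg_norm) auto
  define F where "F t n = FF N S (\<lambda>k. V k t) n" for t n
  have odeF: "(V n has_vector_derivative F t n) (at t within {0..})" if "0 \<le> t" "n < N" for t n
    using ode[OF that] by (simp add: F_def)
  define A' where "A' t = avg N (F t)" for t
  have dA: "(A has_vector_derivative A' t) (at t within {0..})" if "0 \<le> t" for t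
  proof -
    have "((\<lambda>t. \<Sum>n<N. dg (V n t)) has_vector_derivative (\<Sum>n<N. dg (F t n))) (at t within {0..})"
      by (intro has_vector_derivative_sum bounded_linear.has_vector_derivative[OF bl_dg] odeF that) auto
    then show ?thesis unfolding A_def A'_def avg_def
      by (rule bounded_linear.has_vector_derivative[OF bounded_linear_scaleR_right])
  qed
  define E where "E t = (\<Sum>n<N. inner (V n t - A t) (V n t - A t))" for t
  define E' where "E' t = (\<Sum>n<N. inner (V n t - A t) (F t n - A' t) + inner (F t n - A' t) (V n t - A t))" for t
  have dE: "(E has_real_derivative E' t) (at t within {0..})" if "0 \<le> t" for t
    unfolding has_real_derivative_iff_has_vector_derivative E_def E'_def
    by (intro has_vector_derivative_sum bounded_bilinear.has_vector_derivative[OF bounded_bilinear_inner]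
        has_vector_derivative_diff odeF dA that) auto
  have E0: "0 \<le> E t" for t unfolding E_def by (intro sum_nonneg) simp
  define LL where "LL = 3 * (norm (mat 1::'d mt) * real (Suc N) * R^N + norm S)^3"
  have key: "E' t \<le> 2 * (real N * LL) * E t" if t: "0 \<le> t" "t \<le> T" for t
  proof -
    define \<delta> where "\<delta> = sqrt (E t)"
    have d0: "0 \<le> \<delta>" unfolding \<delta>_def using E0 by simp
    have yb: "norm (V k t - A t) \<le> \<delta>" if "k < N" for k
    proof -
      have "(norm (V k t - A t))^2 = inner (V k t - A t) (V k t - A t)" by (simp add: power2_norm_eq_inner)
      also have "\<dots> \<le> E t" unfolding E_def using that
        by (intro member_le_sum) auto
      finally show ?thesis unfolding \<delta>_def by (rule real_le_rsqrt)
    qed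
    define H where "H n = FF N S (\<lambda>k. A t) n" for n
    define Hc where "Hc = (\<chi> i j. if i = j then - (1 / real N) * (A t$i$i)^(N - 1) * ((A t$i$i)^N - S$i$i) else (0::real))"
    have HHc: "H n = Hc" if "n < N" for n
      unfolding H_def Hc_def using FF_const[OF _ Sd that, of "A t"] isdiag_avg[of N "\<lambda>k. V k t"]
      unfolding A_def by blast
    have Hcd: "isdiag Hc" by (simp add: Hc_def isdiag_def)
    have z1: "(\<Sum>n<N. inner (V n t - A t) (H n)) = 0"
    proof -
      have "(\<Sum>n<N. inner (V n t - A t) (H n)) = (\<Sum>n<N. inner (V n t - A t) Hc)"
        by (intro sum.cong refl) (simp add: HHc)
      also have "\<dots> = 0" unfolding A_def by (rule sum_dev_diag[OF N Hcd])
      finally show ?thesis .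
    qed
    have z2: "(\<Sum>n<N. inner (V n t - A t) (A' t)) = 0"
      unfolding A_def A'_def by (rule sum_dev_diag[OF N isdiag_avg])
    have E'eq: "E' t = 2 * (\<Sum>n<N. inner (V n t - A t) (F t n - H n)) + 2 * (\<Sum>n<N. inner (V n t - A t) (H n)) - 2 * (\<Sum>n<N. inner (V n t - A t) (A' t))"
    proof -
      have "E' t = (\<Sum>n<N. 2 * inner (V n t - A t) (F t n - A' t))"
        unfolding E'_def by (intro sum.cong refl) (simp add: inner_commute[of "F t _ - A' t"])
      also have "\<dots> = (\<Sum>n<N. 2 * inner (V n t - A t) (F t n - H n) + 2 * inner (V n t - A t) (H n) - 2 * inner (V n t - A t) (A' t))"
        by (intro sum.cong refl) (simp add: inner_diff_right algebra_simps)
      also have "\<dots> = 2 * (\<Sum>n<N. inner (V n t - A t) (F t n - H n)) + 2 * (\<Sum>n<N. inner (V n t - A t) (H n)) - 2 * (\<Sum>n<N. inner (V n t - A t) (A' t))"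
        by (simp only: sum.distrib sum_subtractf sum_distrib_left)
      finally show ?thesis .
    qed
    have trm: "inner (V n t - A t) (F t n - H n) \<le> \<delta> * (LL * \<delta>)" if "n < N" for n
    proof -
      have "inner (V n t - A t) (F t n - H n) \<le> norm (V n t - A t) * norm (F t n - H n)"
        by (rule norm_cauchy_schwarz)
      also have "\<dots> \<le> \<delta> * (LL * \<delta>)"
      proof (rule mult_mono)
        show "norm (V n t - A t) \<le> \<delta>" using yb that .
        show "norm (F t n - H n) \<le> LL * \<delta>"
          unfolding F_def H_def LL_def
          by (rule FF_lip) (use bV bA yb t R1 that d0 in auto)
        show "0 \<le> \<delta>" using d0 .
        show "0 \<le> norm (F t n - H n)" by simp
      qed
      finally show ?thesis .
    qed
    have "(\<Sum>n<N. inner (V n t - A t) (F t n - H n)) \<le> (\<Sum>n<N. \<delta> * (LL * \<delta>))"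
      using trm by (intro sum_mono) auto
    also have "\<dots> = real N * LL * E t"
      using E0[of t] by (simp add: \<delta>_def algebra_simps)
    finally have "(\<Sum>n<N. inner (V n t - A t) (F t n - H n)) \<le> real N * LL * E t" .
    then show ?thesis unfolding E'eq z1 z2 by simp
  qed
  define c where "c = - (2 * (real N * LL))"
  define h where "h t = - (E t * exp (c * t))" for t
  have "h 0 \<le> h T"
  proof (rule incr0[OF T])
    fix t assume t: "0 \<le> t" "t \<le> T"
    have "((\<lambda>t. exp (c * t)) has_real_derivative exp (c * t) * c) (at t within {0..})"
      by (auto intro!: derivative_eq_intros)
    from DERIV_mult[OF dE[OF t(1)] this]
    show "(h has_real_derivative - (E' t * exp (c * t) + E t * (exp (c * t) * c))) (at t within {0..})"
      unfolding h_def by (intro DERIV_minus) (simp add: ac_simps)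
    have "E' t * exp (c * t) + E t * (exp (c * t) * c) = exp (c * t) * (E' t - 2 * (real N * LL) * E t)"
      by (simp add: c_def algebra_simps)
    also have "\<dots> \<le> 0" using key[OF t] by (intro mult_nonneg_nonpos) auto
    finally show "0 \<le> - (E' t * exp (c * t) + E t * (exp (c * t) * c))" by simp
  qed
  moreover have "E 0 = 0"
  proof -
    have "A 0 = C0" unfolding A_def using N C0d init by (intro avg_const) auto
    then show ?thesis unfolding E_def using init by simp
  qed
  ultimately have "E T * exp (c * T) \<le> 0" by (simp add: h_def)
  then have "E T \<le> 0" by (simp add: mult_le_0_iff)
  then have "E T = 0" using E0[of T] by simp
  then have "\<forall>k\<in>{..<N}. inner (V k T - A T) (V k T - A T) = 0"
    unfolding E_def by (subst sum_nonneg_eq_0_iff[symmetric]) auto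
  then show ?thesis using n by (simp add: A_def)
qed



lemma cont_from_deriv:
  assumes "\<And>t. 0 \<le> t \<Longrightarrow> (f has_real_derivative f' t) (at t within {0..})"
  shows "continuous_on {0..T} f"
  unfolding continuous_on_eq_continuous_within
proof
  fix t assume t: "t \<in> {0..T}"
  have "continuous (at t within {0..}) f"
    using assms[of t] t by (auto intro: DERIV_continuous)
  then show "continuous (at t within {0..T}) f"
    by (rule continuous_within_subset) auto
qed

lemma pos_lemma:
  fixes dd :: "real \<Rightarrow> real"
  assumes N: "N \<ge> 1" and s: "0 \<le> s" and d0: "0 < dd 0"
    and dd: "\<And>t. 0 \<le> t \<Longrightarrow> (dd has_real_derivative (- (1 / real N) * dd t ^ (N - 1) * (dd t ^ N - s))) (at t within {0..})"
    and T: "0 \<le> T"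
  shows "0 < dd T"
proof (cases "N = 1")
  case True
  define h where "h t = dd t * exp t" for t
  have "h 0 \<le> h T"
  proof (rule incr0[OF T])
    fix t assume t: "0 \<le> t" "t \<le> T"
    show "(h has_real_derivative ((- (1 / real N) * dd t ^ (N - 1) * (dd t ^ N - s)) * exp t + dd t * exp t)) (at t within {0..})"
      unfolding h_def by (auto intro!: derivative_eq_intros dd t)
    show "0 \<le> (- (1 / real N) * dd t ^ (N - 1) * (dd t ^ N - s)) * exp t + dd t * exp t"
      using True s by (simp add: algebra_simps)
  qed
  then have "0 < dd T * exp T" using d0 by (simp add: h_def)
  then show ?thesis by (simp add: zero_less_mult_iff)
next
  case False
  then have N2: "N \<ge> 2" using N by simp
  have nz: "dd T' \<noteq> 0" if T': "0 \<le> T'" for T'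
  proof -
    define g where "g t = (1 / real N) * dd t ^ (N - 2) * (dd t ^ N - s)" for t
    have "continuous_on {0..T'} dd" by (rule cont_from_deriv[OF dd])
    then have "continuous_on {0..T'} g" unfolding g_def by (intro continuous_intros)
    then have "compact (g ` {0..T'})" by (intro compact_continuous_image) auto
    then obtain K where K: "\<And>x. x \<in> g ` {0..T'} \<Longrightarrow> norm x \<le> K"
      using compact_imp_bounded bounded_iff by metis
    define h where "h t = dd t ^ 2 * exp (2 * K * t)" for t
    have "h 0 \<le> h T'"
    proof (rule incr0[OF T'])
      fix t assume t: "0 \<le> t" "t \<le> T'"
      show "(h has_real_derivative (2 * dd t * (- (1 / real N) * dd t ^ (N - 1) * (dd t ^ N - s))) * exp (2 * K * t) + dd t ^ 2 * (exp (2 * K * t) * (2 * K))) (at t within {0..})"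
        unfolding h_def by (auto intro!: derivative_eq_intros dd t simp: power2_eq_square)
      have pw: "dd t * dd t ^ (N - 1) = dd t ^ 2 * dd t ^ (N - 2)"
      proof -
        have a1: "Suc (N - 1) = N" using N by simp
        have a2: "2 + (N - 2) = N" using N2 by simp
        have "dd t * dd t ^ (N - 1) = dd t ^ Suc (N - 1)" by (simp only: power_Suc)
        also have "\<dots> = dd t ^ (2 + (N - 2))" by (simp only: a1 a2)
        also have "\<dots> = dd t ^ 2 * dd t ^ (N - 2)" by (simp only: power_add)
        finally show ?thesis .
      qed
      have gK: "g t \<le> K" using K[of "g t"] t by auto
      have "2 * dd t * (- (1 / real N) * dd t ^ (N - 1) * (dd t ^ N - s)) = - 2 * (dd t * dd t ^ (N - 1)) * ((1 / real N) * (dd t ^ N - s))"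
        by (simp add: algebra_simps diff_divide_distrib)
      also have "\<dots> = - 2 * dd t ^ 2 * g t" unfolding pw g_def by (simp add: algebra_simps diff_divide_distrib)
      finally have e: "2 * dd t * (- (1 / real N) * dd t ^ (N - 1) * (dd t ^ N - s)) = - 2 * dd t ^ 2 * g t" .
      have "0 \<le> 2 * dd t ^ 2 * (K - g t)" using gK by simp
      then show "0 \<le> (2 * dd t * (- (1 / real N) * dd t ^ (N - 1) * (dd t ^ N - s))) * exp (2 * K * t) + dd t ^ 2 * (exp (2 * K * t) * (2 * K))"
      proof -
        have "(- 2 * dd t ^ 2 * g t) * exp (2 * K * t) + dd t ^ 2 * (exp (2 * K * t) * (2 * K)) = exp (2 * K * t) * (2 * dd t ^ 2 * (K - g t))"
          by (simp add: algebra_simps)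
        also have "\<dots> \<ge> 0" using \<open>0 \<le> 2 * dd t ^ 2 * (K - g t)\<close> by simp
        finally show ?thesis unfolding e .
      qed
    qed
    moreover have "0 < h 0" using d0 by (simp add: h_def)
    ultimately have "0 < h T'" by linarith
    then show ?thesis by (auto simp: h_def)
  qed
  show ?thesis
  proof (rule ccontr)
    assume "\<not> 0 < dd T"
    then have "dd T \<le> 0" by simp
    moreover have "continuous_on {0..T} dd" by (rule cont_from_deriv[OF dd])
    ultimately obtain t where "0 \<le> t" "t \<le> T" "dd t = 0"
      using IVT2'[of dd T 0 0] T d0 by auto
    then show False using nz by auto
  qed
qed



lemma gderiv_unique: "GDERIV f x :> G \<Longrightarrow> GDERIV f x :> G' \<Longrightarrow> G = G'"
proof -
  assume a: "GDERIV f x :> G" "GDERIV f x :> G'"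
  have "(\<lambda>h. inner h G) = (\<lambda>h. inner h G')"
    using has_derivative_unique a unfolding gderiv_def by blast
  then have "inner (G - G') G = inner (G - G') G'" by metis
  then have "inner (G - G') (G - G') = 0" by (simp add: inner_diff_right)
  then show ?thesis by simp
qed

lemma diag_quad: "(transpose U ** (W::('d::finite) mt) ** U)$i$i = column i U \<bullet> (W *v column i U)"
proof -
  have "(transpose U ** W ** U)$i$i = (\<Sum>k\<in>UNIV. \<Sum>l\<in>UNIV. U$l$i * W$l$k * U$k$i)"
    by (simp add: matrix_matrix_mult_def transpose_def sum_distrib_right)
  also have "\<dots> = (\<Sum>l\<in>UNIV. \<Sum>k\<in>UNIV. U$l$i * W$l$k * U$k$i)" by (rule sum.swap)
  also have "\<dots> = column i U \<bullet> (W *v column i U)"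
    by (simp add: inner_vec_def matrix_vector_mult_def column_def sum_distrib_left ac_simps)
  finally show ?thesis .
qed

lemma conj_FF:
  fixes U :: "('d::finite) mt"
  assumes U: "orthogonal_matrix U"
  shows "transpose U ** (- ((1 / real N) *\<^sub>R (transpose (prodmat (N - Suc n) (\<lambda>k. X (k + Suc n))) ** (prodmat N X - Wst) ** transpose (prodmat n X)))) ** U
    = FF N (transpose U ** Wst ** U) (\<lambda>k. transpose U ** X k ** U) n"
proof -
  have uu: "U ** transpose U = mat 1" using U by (simp add: orthogonal_matrix_def)
  have uuL: "M ** U ** transpose U = M" for M :: "'d mt"
    by (simp add: matrix_mul_assoc[symmetric] uu)
  have c1: "prodmat (N - Suc n) (\<lambda>k. transpose U ** X (k + Suc n) ** U) = transpose U ** prodmat (N - Suc n) (\<lambda>k. X (k + Suc n)) ** U"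
    by (rule prodmat_conj[OF U, symmetric])
  have c2: "prodmat N (\<lambda>k. transpose U ** X k ** U) = transpose U ** prodmat N X ** U"
    by (rule prodmat_conj[OF U, symmetric])
  have c3: "prodmat n (\<lambda>k. transpose U ** X k ** U) = transpose U ** prodmat n X ** U"
    by (rule prodmat_conj[OF U, symmetric])
  have tr: "transpose (transpose U ** M ** U) = transpose U ** transpose M ** U" for M :: "'d mt"
    by (simp add: matrix_transpose_mul matrix_mul_assoc)
  have mid: "transpose U ** P ** U - transpose U ** Wst ** U = transpose U ** (P - Wst) ** U" for P :: "'d mt"
    by (simp add: mm_diff_left mm_diff_right)
  have prod: "(transpose U ** A ** U) ** (transpose U ** Q ** U) ** (transpose U ** B ** U) = transpose U ** (A ** Q ** B) ** U"
    for A Q B :: "'d mt"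
    by (simp only: matrix_mul_assoc uuL)
  have lin: "transpose U ** (- (a *\<^sub>R M)) ** U = - (a *\<^sub>R (transpose U ** M ** U))" for a and M :: "'d mt"
    by (simp only: scaleR_minus_left[symmetric] mm_scale_left mm_scale_right)
  show ?thesis
    unfolding FF_def c1 c2 c3 tr mid prod lin ..
qed


theorem theorem4:
  fixes N :: nat and \<sigma>0 :: real and Wst U :: "real^'d^'d"
    and Ws :: "nat \<Rightarrow> real \<Rightarrow> real^'d^'d"
  assumes N: "N \<ge> 1"
    and s0: "\<sigma>0 > 0"
    and sym: "transpose Wst = Wst"
    and psd: "\<forall>x. x \<bullet> (Wst *v x) \<ge> 0"
    and init: "\<forall>n<N. Ws n 0 = root N \<sigma>0 *\<^sub>R mat 1"
    and flow: "grad_flow N Wst Ws"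
    and orth: "orthogonal_matrix U"
    and diag: "\<forall>i j. i \<noteq> j \<longrightarrow> (transpose U ** Wst ** U) $ i $ j = 0"
  shows "\<forall>t\<ge>0.
     (\<forall>i j. i \<noteq> j \<longrightarrow> (transpose U ** prodmat N (\<lambda>k. Ws k t) ** U) $ i $ j = 0) \<and>
     (\<forall>i. (transpose U ** prodmat N (\<lambda>k. Ws k t) ** U) $ i $ i \<ge> 0 \<and>
        ((\<lambda>s. (transpose U ** prodmat N (\<lambda>k. Ws k s) ** U) $ i $ i) has_real_derivative
          ((transpose U ** prodmat N (\<lambda>k. Ws k t) ** U) $ i $ i) powr (2 - 2 / real N) *
          ((transpose U ** Wst ** U) $ i $ i - (transpose U ** prodmat N (\<lambda>k. Ws k t) ** U) $ i $ i))
          (at t within {0..}))"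
proof -
  define S where "S = transpose U ** Wst ** U"
  have Sd: "isdiag S" using diag by (simp add: isdiag_def S_def)
  define V where "V n t = transpose U ** Ws n t ** U" for n t
  define c where "c = root N \<sigma>0"
  have c0: "0 < c" unfolding c_def using N s0 by simp
  define C0 where "C0 = c *\<^sub>R (mat 1 :: real^'d^'d)"
  have C0d: "isdiag C0" by (simp add: C0_def isdiag_def mat_def)
  have utu: "transpose U ** U = mat 1" using orth by (simp add: orthogonal_matrix_def)
  have initV: "V n 0 = C0" if "n < N" for n
    using init that by (simp add: V_def C0_def c_def mm_scale_left mm_scale_right utu)
  have odeV: "(V n has_vector_derivative FF N S (\<lambda>k. V k t) n) (at t within {0..})"
    if t: "0 \<le> t" and n: "n < N" for t n
  proof -
    obtain G where G: "GDERIV (\<lambda>X. lossN N Wst ((\<lambda>k. Ws k t)(n := X))) (Ws n t) :> G"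
      and dW: "(Ws n has_vector_derivative (- G)) (at t within {0..})"
      using flow t n unfolding grad_flow_def by blast
    have G0: "GDERIV (\<lambda>X. lossN N Wst ((\<lambda>k. Ws k t)(n := X))) (Ws n t) :>
      ((1 / real N) *\<^sub>R (transpose (prodmat (N - Suc n) (\<lambda>k. Ws (k + Suc n) t)) ** (prodmat N (\<lambda>k. Ws k t) - Wst) ** transpose (prodmat n (\<lambda>k. Ws k t))))"
      using grad_formula[OF n, where Ws="\<lambda>k. Ws k t" and Wst=Wst] by simp
    have GG: "G = (1 / real N) *\<^sub>R (transpose (prodmat (N - Suc n) (\<lambda>k. Ws (k + Suc n) t)) ** (prodmat N (\<lambda>k. Ws k t) - Wst) ** transpose (prodmat n (\<lambda>k. Ws k t)))"
      by (rule gderiv_unique[OF G G0])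
    have "((\<lambda>x. transpose U ** Ws n x ** U) has_vector_derivative transpose U ** (- G) ** U) (at t within {0..})"
      by (rule bounded_linear.has_vector_derivative[OF bl_mm3 dW])
    also have "transpose U ** (- G) ** U = FF N S (\<lambda>k. V k t) n"
      unfolding GG S_def V_def by (rule conj_FF[OF orth])
    finally show ?thesis unfolding V_def .
  qed
  have col: "V n t = avg N (\<lambda>k. V k t)" if "0 \<le> t" "n < N" for t n
    by (rule collapse[OF N Sd C0d initV odeV]) (use that in auto)
  define D where "D t = avg N (\<lambda>k. V k t)" for t
  have Dd: "isdiag (D t)" for t unfolding D_def by (rule isdiag_avg)
  have PD: "transpose U ** prodmat N (\<lambda>k. Ws k t) ** U = prodmat N (\<lambda>k. D t)" if "0 \<le> t" for t
  proof -
    have "transpose U ** prodmat N (\<lambda>k. Ws k t) ** U = prodmat N (\<lambda>k. V k t)"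
      unfolding V_def by (rule prodmat_conj[OF orth])
    also have "\<dots> = prodmat N (\<lambda>k. D t)"
      by (rule prodmat_cong) (use col that in \<open>simp add: D_def\<close>)
    finally show ?thesis .
  qed
  have ent: "(transpose U ** prodmat N (\<lambda>k. Ws k t) ** U)$i$j = (if i = j then (D t$i$i)^N else 0)"
    if "0 \<le> t" for t i j
    using PD[OF that] prodmat_const_diag[OF Dd] by simp
  have N0: "0 < N" using N by simp
  have dD: "((\<lambda>s. D s$i$i) has_real_derivative (- (1 / real N) * (D t$i$i)^(N - 1) * ((D t$i$i)^N - S$i$i))) (at t within {0..})"
    if t: "0 \<le> t" for t i
  proof -
    have bl: "bounded_linear (\<lambda>M::real^'d^'d. M$i$i)"
    proof -
      have "linear (\<lambda>M::real^'d^'d. M$i$i)" by (rule linearI) simp_all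
      then show ?thesis by (simp add: linear_conv_bounded_linear)
    qed
    have "FF N S (\<lambda>k. V k t) 0 = FF N S (\<lambda>k. D t) 0"
      by (rule FF_cong[OF N0]) (use col t in \<open>simp add: D_def\<close>)
    also have "\<dots> = (\<chi> i j. if i = j then - (1 / real N) * (D t$i$i)^(N - 1) * ((D t$i$i)^N - S$i$i) else 0)"
      by (rule FF_const[OF Dd Sd N0])
    finally have eqF: "FF N S (\<lambda>k. V k t) 0 $i$i = - (1 / real N) * (D t$i$i)^(N - 1) * ((D t$i$i)^N - S$i$i)"
      by simp
    have "((\<lambda>s. V 0 s $i$i) has_vector_derivative FF N S (\<lambda>k. V k t) 0 $i$i) (at t within {0..})"
      by (rule bounded_linear.has_vector_derivative[OF bl odeV[OF t N0]])
    then have "((\<lambda>s. V 0 s $i$i) has_real_derivative (- (1 / real N) * (D t$i$i)^(N - 1) * ((D t$i$i)^N - S$i$i))) (at t within {0..})"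
      unfolding has_real_derivative_iff_has_vector_derivative eqF .
    then show ?thesis
      by (rule has_field_derivative_transform_within[where d=1]) (use t col N0 in \<open>auto simp: D_def\<close>)
  qed
  have sii: "0 \<le> S$i$i" for i
    unfolding S_def diag_quad using psd by simp
  have D0: "D 0 $i$i = c" for i
  proof -
    have "D 0 = C0" unfolding D_def by (rule avg_const[OF N C0d]) (simp add: initV)
    then show ?thesis by (simp add: C0_def mat_def)
  qed
  have pos: "0 < D t $i$i" if "0 \<le> t" for t i
    by (rule pos_lemma[OF N sii, of "\<lambda>s. D s $i$i" i]) (use D0 c0 dD that in auto)
  show ?thesis
  proof (intro allI impI conjI)
    fix t :: real and i j :: 'd
    assume t: "0 \<le> t"
    show "i \<noteq> j \<Longrightarrow> (transpose U ** prodmat N (\<lambda>k. Ws k t) ** U)$i$j = 0"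
      using ent[OF t] by simp
    show "0 \<le> (transpose U ** prodmat N (\<lambda>k. Ws k t) ** U)$i$i"
      using ent[OF t] pos[OF t, of i] by simp
    define d where "d = D t $i$i"
    have d0: "0 < d" unfolding d_def by (rule pos[OF t])
    have pw: "(d^N) powr (2 - 2 / real N) = d^(N - 1) * d^(N - 1)"
    proof -
      have "(d^N) powr (2 - 2 / real N) = (d powr real N) powr (2 - 2 / real N)"
        using d0 by (simp add: powr_realpow)
      also have "\<dots> = d powr (real N * (2 - 2 / real N))" by (simp add: powr_powr)
      also have "real N * (2 - 2 / real N) = real ((N - 1) + (N - 1))"
        using N by (simp add: field_simps of_nat_diff)
      also have "d powr real ((N - 1) + (N - 1)) = d^((N - 1) + (N - 1))"
        by (rule powr_realpow[OF d0])
      finally show ?thesis by (simp add: power_add)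
    qed
    have "((\<lambda>s. (D s$i$i)^N) has_real_derivative (real N * (D t$i$i)^(N - 1) * (- (1 / real N) * (D t$i$i)^(N - 1) * ((D t$i$i)^N - S$i$i)))) (at t within {0..})"
      using DERIV_power[OF dD[OF t, of i], of N] by (simp add: ac_simps)
    moreover have "real N * (D t$i$i)^(N - 1) * (- (1 / real N) * (D t$i$i)^(N - 1) * ((D t$i$i)^N - S$i$i))
        = ((D t$i$i)^N) powr (2 - 2 / real N) * (S$i$i - (D t$i$i)^N)"
      unfolding d_def[symmetric] pw using N0 by (simp add: field_simps)
    ultimately have "((\<lambda>s. (D s$i$i)^N) has_real_derivative ((D t$i$i)^N) powr (2 - 2 / real N) * (S$i$i - (D t$i$i)^N)) (at t within {0..})"
      by simp
    then have "((\<lambda>s. (transpose U ** prodmat N (\<lambda>k. Ws k s) ** U)$i$i) has_real_derivative ((D t$i$i)^N) powr (2 - 2 / real N) * (S$i$i - (D t$i$i)^N)) (at t within {0..})"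
      by (rule has_field_derivative_transform_within[where d=1]) (use ent t in auto)
    then show "((\<lambda>s. (transpose U ** prodmat N (\<lambda>k. Ws k s) ** U)$i$i) has_real_derivative
          ((transpose U ** prodmat N (\<lambda>k. Ws k t) ** U)$i$i) powr (2 - 2 / real N) *
          ((transpose U ** Wst ** U)$i$i - (transpose U ** prodmat N (\<lambda>k. Ws k t) ** U)$i$i))
          (at t within {0..})"
      using ent[OF t] by (simp add: S_def)
  qed
qed


end
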